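(* Let $m\ge 0$ be an integer. Any two singly even self-dual $[24m+10,12m+5,4m+2]$ codes with minimal shadow have the same weight enumerator; that is, the weight enumerator of a singly even self-dual $[24m+10,12m+5,4m+2]$ code with minimal shadow is uniquely determined by $m$.
   Context: A binary code of length $n$ is a subspace of $\mathbb{F}_2^n$; $C^\perp$ is its dual with respect to the standard inner product, and $C$ is self-dual if $C=C^\perp$. A self-dual code is singly even if it contains a codeword of weight $\equiv 2 \pmod 4$. For a singly even self-dual code $C$, let $C_0$ be the subcode of codewords of weight $\equiv 0\pmod 4$; the shadow of $C$ is $S=C_0^\perp\setminus C$. For $n\equiv 2\pmod 8$, $C$ is said to have minimal shadow if the minimum weight of $S$ equals $1$. An $[n,k,d]$ code is a code of length $n$, dimension $k$ and minimum weight $d$. The weight enumerator of $C$ is $\sum_{x\in C} y^{\mathrm{wt}(x)}$. *)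

theory Defs
  imports Main
begin

text \<open>Binary words of length n are represented by their supports:
  a word x in F_2^n is the set of coordinates i < n where x_i = 1.
  Addition in F_2^n is symmetric difference, the weight is card,
  and the standard inner product of x and y is card (x \<inter> y) mod 2.\<close>

definition words :: "nat \<Rightarrow> nat set set" where
  "words n = Pow {..<n}"

definition wt :: "nat set \<Rightarrow> nat" where
  "wt x = card x"

definition vadd :: "nat set \<Rightarrow> nat set \<Rightarrow> nat set" where
  "vadd x y = (x - y) \<union> (y - x)"

definition orth :: "nat set \<Rightarrow> nat set \<Rightarrow> bool" where
  "orth x y \<longleftrightarrow> even (card (x \<inter> y))"

definition linear_code :: "nat \<Rightarrow> nat set set \<Rightarrow> bool" where
  "linear_code n C \<longleftrightarrow> C \<subseteq> words n \<and> {} \<in> C \<and> (\<forall>x\<in>C. \<forall>y\<in>C. vadd x y \<in> C)"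

definition dual_code :: "nat \<Rightarrow> nat set set \<Rightarrow> nat set set" where
  "dual_code n C = {x \<in> words n. \<forall>y\<in>C. orth x y}"

definition self_dual :: "nat \<Rightarrow> nat set set \<Rightarrow> bool" where
  "self_dual n C \<longleftrightarrow> linear_code n C \<and> C = dual_code n C"

definition singly_even :: "nat set set \<Rightarrow> bool" where
  "singly_even C \<longleftrightarrow> (\<exists>c\<in>C. wt c mod 4 = 2)"

definition doubly_even_subcode :: "nat set set \<Rightarrow> nat set set" where
  "doubly_even_subcode C = {c \<in> C. wt c mod 4 = 0}"

definition shadow :: "nat \<Rightarrow> nat set set \<Rightarrow> nat set set" where
  "shadow n C = dual_code n (doubly_even_subcode C) - C"

definition code_dim :: "nat set set \<Rightarrow> nat \<Rightarrow> bool" where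
  "code_dim C k \<longleftrightarrow> card C = 2 ^ k"

definition min_weight :: "nat set set \<Rightarrow> nat" where
  "min_weight C = Min (wt ` (C - {{}}))"

definition min_wt_set :: "nat set set \<Rightarrow> nat" where
  "min_wt_set S = Min (wt ` S)"

definition minimal_shadow :: "nat \<Rightarrow> nat set set \<Rightarrow> bool" where
  "minimal_shadow n C \<longleftrightarrow> shadow n C \<noteq> {} \<and> min_wt_set (shadow n C) = 1"

definition is_nkd_code :: "nat \<Rightarrow> nat \<Rightarrow> nat \<Rightarrow> nat set set \<Rightarrow> bool" where
  "is_nkd_code n k d C \<longleftrightarrow> linear_code n C \<and> code_dim C k \<and> C \<noteq> {{}} \<and> min_weight C = d"

text \<open>Weight enumerator sum_{x in C} y^{wt x}, represented by its
  coefficient sequence: coefficient of y^i is the number of codewords of weight i.\<close>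
definition weight_enum :: "nat set set \<Rightarrow> nat \<Rightarrow> nat" where
  "weight_enum C i = card {c \<in> C. wt c = i}"

end

theory Submission
  imports Defs Complex_Main
begin

lemma binom_rec_nat: "Suc k * (a choose Suc k) = (a - k) * (a choose k)"
proof (cases a)
  case 0 then show ?thesis by simp
next
  case (Suc n)
  then show ?thesis using Suc_times_binomial[of k n] binomial_absorb_comp[of a k] by simp
qed

lemma binom_rec_real:
  "real (a choose k) * (real a - b) = real (Suc k) * real (a choose Suc k) + (real k - b) * real (a choose k)"
proof -
  have "real (Suc k * (a choose Suc k)) = real ((a - k) * (a choose k))" using binom_rec_nat by metis
  moreover have "real ((a - k) * (a choose k)) = (real a - real k) * real (a choose k)"
  proof (cases "k \<le> a")
    case True then show ?thesis by (simp add: of_nat_diff)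
  next
    case False then show ?thesis by simp
  qed
  ultimately show ?thesis by (simp add: algebra_simps)
qed

lemma Sprod:
  fixes z :: "nat \<Rightarrow> real" and a :: "nat \<Rightarrow> nat" and e :: real
  assumes h: "\<And>\<nu>. \<nu> \<le> K - 1 \<Longrightarrow> (\<Sum>t<K. z t * real (a t choose \<nu>)) = (if \<nu> = K - 1 then e else 0)"
  shows "finite B \<Longrightarrow> \<nu> + card B \<le> K - 1 \<Longrightarrow>
    (\<Sum>t<K. z t * real (a t choose \<nu>) * (\<Prod>s\<in>B. real (a t) - real (a s))) =
    (if \<nu> + card B = K - 1 then fact (K - 1) / fact \<nu> * e else 0)"
proof (induction B arbitrary: \<nu> rule: finite_induct)
  case empty
  then show ?case using h[of \<nu>] by simp
next
  case (insert s B)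
  have cB: "card (insert s B) = Suc (card B)" using insert by simp
  have "(\<Sum>t<K. z t * real (a t choose \<nu>) * (\<Prod>s\<in>insert s B. real (a t) - real (a s)))
     = (\<Sum>t<K. real (Suc \<nu>) * (z t * real (a t choose Suc \<nu>) * (\<Prod>s\<in>B. real (a t) - real (a s)))
          + (real \<nu> - real (a s)) * (z t * real (a t choose \<nu>) * (\<Prod>s\<in>B. real (a t) - real (a s))))"
  proof (rule sum.cong[OF refl])
    fix t
    have "z t * real (a t choose \<nu>) * (\<Prod>s\<in>insert s B. real (a t) - real (a s))
      = z t * (real (a t choose \<nu>) * (real (a t) - real (a s))) * (\<Prod>s\<in>B. real (a t) - real (a s))"
      using insert by (simp add: algebra_simps)
    also have "\<dots> = z t * (real (Suc \<nu>) * real (a t choose Suc \<nu>) + (real \<nu> - real (a s)) * real (a t choose \<nu>)) * (\<Prod>s\<in>B. real (a t) - real (a s))"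
      by (simp only: binom_rec_real)
    finally show "z t * real (a t choose \<nu>) * (\<Prod>s\<in>insert s B. real (a t) - real (a s))
     = real (Suc \<nu>) * (z t * real (a t choose Suc \<nu>) * (\<Prod>s\<in>B. real (a t) - real (a s)))
          + (real \<nu> - real (a s)) * (z t * real (a t choose \<nu>) * (\<Prod>s\<in>B. real (a t) - real (a s)))"
      by (simp add: algebra_simps)
  qed
  also have "\<dots> = real (Suc \<nu>) * (\<Sum>t<K. z t * real (a t choose Suc \<nu>) * (\<Prod>s\<in>B. real (a t) - real (a s)))
     + (real \<nu> - real (a s)) * (\<Sum>t<K. z t * real (a t choose \<nu>) * (\<Prod>s\<in>B. real (a t) - real (a s)))"
    by (simp add: sum.distrib sum_distrib_left)
  also have "\<dots> = (if \<nu> + card (insert s B) = K - 1 then fact (K - 1) / fact \<nu> * e else 0)"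
  proof -
    have i1: "(\<Sum>t<K. z t * real (a t choose Suc \<nu>) * (\<Prod>s\<in>B. real (a t) - real (a s)))
       = (if Suc \<nu> + card B = K - 1 then fact (K - 1) / fact (Suc \<nu>) * e else 0)"
      using insert.IH[of "Suc \<nu>"] insert.prems cB by simp
    have i2: "(\<Sum>t<K. z t * real (a t choose \<nu>) * (\<Prod>s\<in>B. real (a t) - real (a s))) = 0"
      using insert.IH[of \<nu>] insert.prems cB by simp
    have ff: "real (Suc \<nu>) * (fact (K - 1) / fact (Suc \<nu>)) = fact (K - 1) / fact \<nu>"
      by (simp add: fact_Suc del: of_nat_Suc)
    have ff2: "real (Suc \<nu>) * (fact (K - 1) / fact (Suc \<nu>) * e) = fact (K-1)/fact \<nu> * e"
      using ff by (metis mult.assoc)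
    show ?thesis
    proof (cases "\<nu> + card (insert s B) = K - 1")
      case True
      then have "Suc \<nu> + card B = K - 1" using cB by simp
      then show ?thesis using i1 i2 True ff2 by (simp only: if_True simp_thms mult_zero_right add_0_right)
    next
      case False
      then have "Suc \<nu> + card B \<noteq> K - 1" using cB by simp
      then show ?thesis using i1 i2 False by simp
    qed
  qed
  finally show ?case .
qed

lemma lin_unique:
  fixes z :: "nat \<Rightarrow> real" and a :: "nat \<Rightarrow> nat" and c :: real
  assumes K: "K \<ge> 1"
  and h0: "\<And>\<nu>. \<nu> < K - 1 \<Longrightarrow> (\<Sum>t<K. z t * real (a t choose \<nu>)) = 0"
  and h1: "(\<Sum>t<K. z t * real (a t choose (K-1))) = c * z (K-1)"
  and inj: "inj_on a {..<K}"
  and P: "(\<Prod>s<K-1. (real (a (K-1)) - real (a s))) \<noteq> c * fact (K-1)"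
  shows "t < K \<Longrightarrow> z t = 0"
proof -
  have hh: "\<And>\<nu>. \<nu> \<le> K - 1 \<Longrightarrow> (\<Sum>t<K. z t * real (a t choose \<nu>)) = (if \<nu> = K - 1 then c * z (K-1) else 0)"
    using h0 h1 by (metis le_neq_implies_less)
  note S = Sprod[OF hh]
  have KK: "{..<K} = insert (K-1) {..<K-1}" using K by auto
  have zK: "z (K-1) = 0"
  proof -
    have "(\<Sum>t<K. z t * real (a t choose 0) * (\<Prod>s\<in>{..<K-1}. real (a t) - real (a s))) = fact (K-1) * (c * z (K-1))"
      using S[of "{..<K-1}" 0] by simp
    moreover have "(\<Sum>t<K. z t * real (a t choose 0) * (\<Prod>s\<in>{..<K-1}. real (a t) - real (a s)))
        = z (K-1) * (\<Prod>s<K-1. (real (a (K-1)) - real (a s)))"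
    proof -
      have "(\<Sum>t\<in>{..<K-1}. z t * real (a t choose 0) * (\<Prod>s\<in>{..<K-1}. real (a t) - real (a s))) = 0"
        by (rule sum.neutral) (auto intro!: prod_zero)
      then show ?thesis unfolding KK by simp
    qed
    ultimately have "z (K-1) * (\<Prod>s<K-1. (real (a (K-1)) - real (a s))) = z (K-1) * (c * fact (K-1))"
      by (metis mult.commute mult.left_commute)
    then show ?thesis using P by (metis mult_left_cancel)
  qed
  assume t: "t < K"
  show "z t = 0"
  proof (cases "t = K - 1")
    case True then show ?thesis using zK by simp
  next
    case False
    then have t1: "t < K - 1" using t by simp
    let ?B = "{..<K-1} - {t}"
    have cB: "card ?B = K - 2" using t1 by simp
    have "(\<Sum>t<K. z t * real (a t choose 0) * (\<Prod>s\<in>?B. real (a t) - real (a s))) = 0"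
    proof -
      have ne: "K - 2 \<noteq> K - 1" using t1 by simp
      show ?thesis using S[of ?B 0] cB ne by simp
    qed
    moreover have "(\<Sum>t'<K. z t' * real (a t' choose 0) * (\<Prod>s\<in>?B. real (a t') - real (a s)))
        = z t * (\<Prod>s\<in>?B. real (a t) - real (a s))"
    proof -
      have "(\<Sum>t'<K. z t' * real (a t' choose 0) * (\<Prod>s\<in>?B. real (a t') - real (a s)))
          = (\<Sum>t'\<in>{t}. z t' * real (a t' choose 0) * (\<Prod>s\<in>?B. real (a t') - real (a s)))"
      proof (rule sum.mono_neutral_right)
        show "\<forall>i\<in>{..<K} - {t}. z i * real (a i choose 0) * (\<Prod>s\<in>?B. real (a i) - real (a s)) = 0"
        proof
          fix i assume i: "i \<in> {..<K} - {t}"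
          show "z i * real (a i choose 0) * (\<Prod>s\<in>?B. real (a i) - real (a s)) = 0"
          proof (cases "i = K - 1")
            case True then show ?thesis using zK by simp
          next
            case False then have "i \<in> ?B" using i by auto
            then show ?thesis by (auto intro!: prod_zero)
          qed
        qed
      qed (use t in auto)
      then show ?thesis by simp
    qed
    moreover have "(\<Prod>s\<in>?B. real (a t) - real (a s)) \<noteq> 0"
    proof -
      have "\<And>s. s \<in> ?B \<Longrightarrow> real (a t) - real (a s) \<noteq> 0"
        using inj t by (auto simp: inj_on_def)
      then show ?thesis by simp
    qed
    ultimately show ?thesis by simp
  qed
qed

lemma card_vadd: "finite a \<Longrightarrow> finite b \<Longrightarrow> card (vadd a b) + 2 * card (a \<inter> b) = card a + card b"
proof -
  assume fa: "finite a" and fb: "finite b"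
  have d: "card (vadd a b) = card (a - b) + card (b - a)"
    unfolding vadd_def by (rule card_Un_disjoint) (use fa fb in auto)
  have "card a = card ((a - b) \<union> (a \<inter> b))" by (simp add: Un_Diff_Int)
  also have "\<dots> = card (a - b) + card (a \<inter> b)"
    by (rule card_Un_disjoint) (use fa in auto)
  finally have e1: "card a = card (a - b) + card (a \<inter> b)" .
  have "card b = card ((b - a) \<union> (a \<inter> b))" by (metis Un_Diff_Int Int_commute)
  also have "\<dots> = card (b - a) + card (a \<inter> b)"
    by (rule card_Un_disjoint) (use fb in auto)
  finally have e2: "card b = card (b - a) + card (a \<inter> b)" .
  show ?thesis using d e1 e2 by simp
qed

lemma vadd_Int: "x \<inter> vadd a b = vadd (x \<inter> a) (x \<inter> b)"
  unfolding vadd_def by auto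

lemma par_vadd: "finite a \<Longrightarrow> finite b \<Longrightarrow>
  (-1::int) ^ card (x \<inter> vadd a b) = (-1) ^ card (x \<inter> a) * (-1) ^ card (x \<inter> b)"
proof -
  assume fa: "finite a" and fb: "finite b"
  have "card (x \<inter> vadd a b) + 2 * card ((x \<inter> a) \<inter> (x \<inter> b)) = card (x \<inter> a) + card (x \<inter> b)"
    unfolding vadd_Int by (rule card_vadd) (use fa fb in auto)
  then have "(-1::int) ^ (card (x \<inter> vadd a b) + 2 * card ((x \<inter> a) \<inter> (x \<inter> b))) = (-1) ^ (card (x \<inter> a) + card (x \<inter> b))"
    by simp
  then show ?thesis by (simp add: power_add power_mult)
qed

lemma char1:
  fixes T v :: "nat set"
  assumes fT: "finite T" and fv: "finite v"
  shows "(\<Sum>x\<in>Pow T. (-1::int) ^ card (x \<inter> v)) = (if T \<inter> v = {} then 2 ^ card T else 0)"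
proof (cases "T \<inter> v = {}")
  case True
  then have "\<And>x. x \<in> Pow T \<Longrightarrow> x \<inter> v = {}" by auto
  then have "(\<Sum>x\<in>Pow T. (-1::int) ^ card (x \<inter> v)) = (\<Sum>x\<in>Pow T. 1)" by simp
  then show ?thesis using True fT by (simp add: card_Pow)
next
  case False
  then obtain t where t: "t \<in> T" "t \<in> v" by auto
  let ?g = "\<lambda>x. vadd x {t}"
  have inv: "\<And>x. ?g (?g x) = x" unfolding vadd_def by auto
  have bij: "bij_betw ?g (Pow T) (Pow T)"
    by (rule bij_betw_byWitness[where f'="?g"]) (use inv t in \<open>auto simp: vadd_def\<close>)
  have "(\<Sum>x\<in>Pow T. (-1::int) ^ card (x \<inter> v)) = (\<Sum>x\<in>Pow T. (-1::int) ^ card (?g x \<inter> v))"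
    using sum.reindex_bij_betw[OF bij, of "\<lambda>x. (-1::int) ^ card (x \<inter> v)"] by simp
  also have "\<dots> = (\<Sum>x\<in>Pow T. - ((-1::int) ^ card (x \<inter> v)))"
  proof (rule sum.cong[OF refl])
    fix x assume x: "x \<in> Pow T"
    then have fx: "finite x" using fT finite_subset by auto
    have "(-1::int) ^ card (?g x \<inter> v) = (-1::int) ^ card (v \<inter> ?g x)" by (simp add: Int_commute)
    also have "\<dots> = (-1) ^ card (v \<inter> x) * (-1) ^ card (v \<inter> {t})"
      by (rule par_vadd) (use fx in auto)
    also have "v \<inter> {t} = {t}" using t by auto
    finally show "(-1::int) ^ card (?g x \<inter> v) = - ((-1::int) ^ card (x \<inter> v))"
      by (simp add: Int_commute)
  qed
  also have "\<dots> = - (\<Sum>x\<in>Pow T. (-1::int) ^ card (x \<inter> v))" by (simp add: sum_negf)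
  finally have "(\<Sum>x\<in>Pow T. (-1::int) ^ card (x \<inter> v)) = 0" by simp
  then show ?thesis using False by (subst if_not_P) auto
qed

lemma words_finite: "x \<in> words n \<Longrightarrow> finite x"
  unfolding words_def using finite_subset by auto

lemma finite_words: "finite (words n)"
  unfolding words_def by simp

lemma char2:
  assumes lin: "linear_code n C" and fx: "finite x"
  shows "(\<Sum>c\<in>C. (-1::int) ^ card (x \<inter> c)) = (if \<forall>c\<in>C. orth x c then int (card C) else 0)"
proof (cases "\<forall>c\<in>C. orth x c")
  case True
  then have "(\<Sum>c\<in>C. (-1::int) ^ card (x \<inter> c)) = (\<Sum>c\<in>C. 1)"
    by (intro sum.cong) (auto simp: orth_def)
  then show ?thesis using True by simp
next
  case False
  then obtain c0 where c0: "c0 \<in> C" "\<not> orth x c0" by auto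
  have Cw: "C \<subseteq> words n" using lin by (simp add: linear_code_def)
  have fin: "\<And>c. c \<in> C \<Longrightarrow> finite c" using Cw words_finite by auto
  let ?g = "\<lambda>c. vadd c0 c"
  have inv: "\<And>x. ?g (?g x) = x" unfolding vadd_def by auto
  have cl: "\<And>c. c \<in> C \<Longrightarrow> ?g c \<in> C" using lin c0 by (simp add: linear_code_def)
  have bij: "bij_betw ?g C C"
    by (rule bij_betw_byWitness[where f'="?g"]) (use inv cl in auto)
  have "(\<Sum>c\<in>C. (-1::int) ^ card (x \<inter> c)) = (\<Sum>c\<in>C. (-1::int) ^ card (x \<inter> ?g c))"
    using sum.reindex_bij_betw[OF bij, of "\<lambda>c. (-1::int) ^ card (x \<inter> c)"] by simp
  also have "\<dots> = (\<Sum>c\<in>C. - ((-1::int) ^ card (x \<inter> c)))"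
  proof (rule sum.cong[OF refl])
    fix c assume "c \<in> C"
    then have "(-1::int) ^ card (x \<inter> ?g c) = (-1) ^ card (x \<inter> c0) * (-1) ^ card (x \<inter> c)"
      using par_vadd fin c0 by blast
    moreover have "odd (card (x \<inter> c0))" using c0 by (simp add: orth_def)
    ultimately show "(-1::int) ^ card (x \<inter> ?g c) = - ((-1::int) ^ card (x \<inter> c))" by simp
  qed
  also have "\<dots> = - (\<Sum>c\<in>C. (-1::int) ^ card (x \<inter> c))" by (simp add: sum_negf)
  finally have "(\<Sum>c\<in>C. (-1::int) ^ card (x \<inter> c)) = 0" by simp
  then show ?thesis using False by (subst if_not_P) auto
qed

lemma mw_identity:
  assumes sd: "self_dual n C" and T: "T \<subseteq> {..<n}"
  shows "card {c\<in>C. T \<inter> c = {}} * 2 ^ card T = card C * card {x\<in>C. x \<subseteq> T}"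
proof -
  have lin: "linear_code n C" and eq: "C = dual_code n C" using sd by (auto simp: self_dual_def)
  have Cw: "C \<subseteq> words n" using lin by (simp add: linear_code_def)
  have fC: "finite C" using Cw finite_words finite_subset by auto
  have fin: "\<And>c. c \<in> C \<Longrightarrow> finite c" using Cw words_finite by auto
  have fT: "finite T" using T finite_subset by auto
  let ?S = "\<Sum>x\<in>Pow T. \<Sum>c\<in>C. (-1::int) ^ card (x \<inter> c)"
  have "?S = (\<Sum>x\<in>Pow T. if x \<in> C then int (card C) else 0)"
  proof (rule sum.cong[OF refl])
    fix x assume x: "x \<in> Pow T"
    then have xw: "x \<in> words n" using T by (auto simp: words_def)
    have fx: "finite x" using x fT finite_subset by auto
    have "(\<forall>c\<in>C. orth x c) = (x \<in> C)"
    proof -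
      have "(x \<in> C) = (x \<in> dual_code n C)" using eq by simp
      also have "\<dots> = (\<forall>c\<in>C. orth x c)" using xw by (simp add: dual_code_def)
      finally show ?thesis by simp
    qed
    then show "(\<Sum>c\<in>C. (-1::int) ^ card (x \<inter> c)) = (if x \<in> C then int (card C) else 0)"
      using char2[OF lin fx] by simp
  qed
  also have "\<dots> = int (card C) * int (card (Pow T \<inter> C))"
    using fT by (simp add: sum.If_cases)
  finally have s1: "?S = int (card C) * int (card (Pow T \<inter> C))" .
  have "?S = (\<Sum>c\<in>C. \<Sum>x\<in>Pow T. (-1::int) ^ card (x \<inter> c))" by (rule sum.swap)
  also have "\<dots> = (\<Sum>c\<in>C. if T \<inter> c = {} then 2 ^ card T else 0)"
    using char1[OF fT] fin by (intro sum.cong) auto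
  also have "\<dots> = 2 ^ card T * int (card {c\<in>C. T \<inter> c = {}})"
    using fC by (simp add: sum.If_cases Int_def conj_commute)
  finally have s2: "?S = 2 ^ card T * int (card {c\<in>C. T \<inter> c = {}})" .
  have "Pow T \<inter> C = {x\<in>C. x \<subseteq> T}" by auto
  then have "int (card {c\<in>C. T \<inter> c = {}} * 2 ^ card T) = int (card C * card {x\<in>C. x \<subseteq> T})"
    using s1 s2 by (simp add: mult.commute)
  then show ?thesis by (simp only: of_nat_eq_iff)
qed

lemma ar1: "(k::nat) mod 4 \<noteq> 0 \<Longrightarrow> even k \<Longrightarrow> k mod 4 = 2" by presburger
lemma ar2: "(a::nat) + 2*p = X + Y \<Longrightarrow> even p \<Longrightarrow> X mod 4 = 2 \<Longrightarrow> Y mod 4 = 2 \<Longrightarrow> a mod 4 = 0" by presburger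
lemma ar3: "(k::nat) mod 4 = 0 \<Longrightarrow> 4*m+2 \<le> k \<Longrightarrow> k \<le> 20*m+8 \<Longrightarrow> \<exists>t<4*m+2. k = 4*m+4+4*t"
proof -
  assume a: "k mod 4 = 0" "4*m+2 \<le> k" "k \<le> 20*m+8"
  then obtain j where j: "k = 4*j" by (metis dvd_def mod_0_imp_dvd)
  then have "m+1 \<le> j" "j \<le> 5*m+2" using a by auto
  then show ?thesis using j by (intro exI[of _ "j - m - 1"]) auto
qed

lemma dcount:
  assumes "finite A" "finite B"
  shows "(\<Sum>a\<in>A. card {b\<in>B. P a b}) = (\<Sum>b\<in>B. card {a\<in>A. P a b})"
proof -
  have "(\<Sum>a\<in>A. card {b\<in>B. P a b}) = (\<Sum>a\<in>A. \<Sum>b\<in>B. if P a b then 1 else 0)"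
    using assms by (simp add: sum.If_cases Int_def)
  also have "\<dots> = (\<Sum>b\<in>B. \<Sum>a\<in>A. if P a b then 1 else 0)" by (rule sum.swap)
  also have "\<dots> = (\<Sum>b\<in>B. card {a\<in>A. P a b})"
    using assms by (simp add: sum.If_cases Int_def)
  finally show ?thesis .
qed

lemma cnt:
  assumes fA: "finite A" and iA: "i \<in> A"
  shows "card {T. T \<subseteq> A \<and> i \<in> T \<and> card T = Suc k} = (card A - 1) choose k"
proof -
  have "bij_betw (\<lambda>T. T - {i}) {T. T \<subseteq> A \<and> i \<in> T \<and> card T = Suc k} {S. S \<subseteq> A - {i} \<and> card S = k}"
  proof (rule bij_betw_byWitness[where f'="insert i"])
    show "\<forall>a\<in>{T. T \<subseteq> A \<and> i \<in> T \<and> card T = Suc k}. insert i (a - {i}) = a" by auto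
    show "\<forall>a'\<in>{S. S \<subseteq> A - {i} \<and> card S = k}. insert i a' - {i} = a'" by auto
    show "(\<lambda>T. T - {i}) ` {T. T \<subseteq> A \<and> i \<in> T \<and> card T = Suc k} \<subseteq> {S. S \<subseteq> A - {i} \<and> card S = k}"
    proof
      fix S assume "S \<in> (\<lambda>T. T - {i}) ` {T. T \<subseteq> A \<and> i \<in> T \<and> card T = Suc k}"
      then obtain T where T: "T \<subseteq> A" "i \<in> T" "card T = Suc k" "S = T - {i}" by auto
      have "finite T" using T fA finite_subset by auto
      then show "S \<in> {S. S \<subseteq> A - {i} \<and> card S = k}" using T by auto
    qed
    show "insert i ` {S. S \<subseteq> A - {i} \<and> card S = k} \<subseteq> {T. T \<subseteq> A \<and> i \<in> T \<and> card T = Suc k}"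
    proof
      fix T assume "T \<in> insert i ` {S. S \<subseteq> A - {i} \<and> card S = k}"
      then obtain S where S: "S \<subseteq> A - {i}" "card S = k" "T = insert i S" by auto
      have "finite S" using S fA finite_subset by auto
      moreover have "i \<notin> S" using S by auto
      ultimately show "T \<in> {T. T \<subseteq> A \<and> i \<in> T \<and> card T = Suc k}" using S iA by auto
    qed
  qed
  then have "card {T. T \<subseteq> A \<and> i \<in> T \<and> card T = Suc k} = card {S. S \<subseteq> A - {i} \<and> card S = k}"
    by (rule bij_betw_same_card)
  also have "\<dots> = card (A - {i}) choose k" using fA by (simp add: n_subsets)
  finally show ?thesis using iA fA by simp
qed

locale sdc =
  fixes m n :: nat and C :: "nat set set" and i :: nat
  assumes n: "n = 24*m+10"
  and sd: "self_dual n C"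
  and cardC: "card C = 2^(12*m+5)"
  and minw: "\<And>c. c \<in> C \<Longrightarrow> c \<noteq> {} \<Longrightarrow> 4*m+2 \<le> card c"
  and iS: "{i} \<in> dual_code n (doubly_even_subcode C)" and iC: "{i} \<notin> C"
begin

lemma lin: "linear_code n C" using sd by (simp add: self_dual_def)
lemma Cdual: "C = dual_code n C" using sd by (simp add: self_dual_def)
lemma Cw: "C \<subseteq> words n" using lin by (simp add: linear_code_def)
lemma fC: "finite C" using Cw finite_words finite_subset by auto
lemma fin: "c \<in> C \<Longrightarrow> finite c" using Cw words_finite by auto
lemma sub: "c \<in> C \<Longrightarrow> c \<subseteq> {..<n}" using Cw by (auto simp: words_def)
lemma vaddC: "x \<in> C \<Longrightarrow> y \<in> C \<Longrightarrow> vadd x y \<in> C" using lin by (simp add: linear_code_def)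
lemma emptyC: "{} \<in> C" using lin by (simp add: linear_code_def)
lemma i_lt: "i < n" using iS by (auto simp: dual_code_def words_def)

lemma orthC: "x \<in> C \<Longrightarrow> y \<in> C \<Longrightarrow> orth x y"
  using Cdual by (metis (no_types, lifting) dual_code_def mem_Collect_eq)

lemma even_card: "c \<in> C \<Longrightarrow> even (card c)"
  using orthC[of c c] by (simp add: orth_def)

lemma de_no_i: "c \<in> C \<Longrightarrow> card c mod 4 = 0 \<Longrightarrow> i \<notin> c"
proof -
  assume "c \<in> C" "card c mod 4 = 0"
  then have "c \<in> doubly_even_subcode C" by (simp add: doubly_even_subcode_def wt_def)
  then have "orth {i} c" using iS by (simp add: dual_code_def)
  then show "i \<notin> c" by (auto simp: orth_def)
qed

lemma key: "c \<in> C \<Longrightarrow> (i \<notin> c) = (card c mod 4 = 0)"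
proof
  assume c: "c \<in> C" "i \<notin> c"
  show "card c mod 4 = 0"
  proof (rule ccontr)
    assume nc: "card c mod 4 \<noteq> 0"
    have c2: "card c mod 4 = 2" using ar1 nc even_card[OF c(1)] by blast
    have "{i} \<in> dual_code n C"
    proof -
      have "{i} \<in> words n" using i_lt by (simp add: words_def)
      moreover have "\<forall>x\<in>C. orth {i} x"
      proof
        fix x assume x: "x \<in> C"
        have "i \<notin> x"
        proof (cases "card x mod 4 = 0")
          case True then show ?thesis using de_no_i x by simp
        next
          case False
          then have x2: "card x mod 4 = 2" using ar1 even_card[OF x] by blast
          have e: "even (card (x \<inter> c))" using orthC[OF x c(1)] by (simp add: orth_def)
          have "card (vadd x c) + 2 * card (x \<inter> c) = card x + card c"
            by (rule card_vadd[OF fin[OF x] fin[OF c(1)]])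
          then have "card (vadd x c) mod 4 = 0" by (rule ar2[OF _ e x2 c2])
          then have "i \<notin> vadd x c" by (rule de_no_i[OF vaddC[OF x c(1)]])
          then show ?thesis using c by (auto simp: vadd_def)
        qed
        then show "orth {i} x" by (simp add: orth_def)
      qed
      ultimately show ?thesis by (simp add: dual_code_def)
    qed
    then have "{i} \<in> C" using Cdual by metis
    then show False using iC by simp
  qed
next
  assume "c \<in> C" "card c mod 4 = 0"
  then show "i \<notin> c" using de_no_i by simp
qed

lemma UC: "{..<n} \<in> C"
proof -
  have "{..<n} \<in> dual_code n C"
    unfolding dual_code_def words_def orth_def
    using sub even_card by (auto simp: Int_absorb1)
  then show ?thesis using Cdual by metis
qed

lemma compl: "c \<in> C \<Longrightarrow> {..<n} - c \<in> C"
proof -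
  assume c: "c \<in> C"
  have "vadd {..<n} c = {..<n} - c" using sub[OF c] by (auto simp: vadd_def)
  then show ?thesis using vaddC[OF UC c] by simp
qed

lemma card_compl: "c \<in> C \<Longrightarrow> card ({..<n} - c) = n - card c"
  using sub by (simp add: card_Diff_subset fin)

definition f :: "nat \<Rightarrow> nat" where
  "f w = card {c\<in>C. i \<notin> c \<and> card c = w}"

lemma f_compl:
  assumes w: "w \<le> n"
  shows "card {c\<in>C. i \<in> c \<and> card c = w} = f (n - w)"
proof -
  let ?g = "\<lambda>c. {..<n} - c"
  have inv: "\<And>c. c \<in> C \<Longrightarrow> ?g (?g c) = c" using sub by auto
  have "bij_betw ?g {c\<in>C. i \<in> c \<and> card c = w} {c\<in>C. i \<notin> c \<and> card c = n - w}"
  proof (rule bij_betw_byWitness[where f'="?g"])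
    show "\<forall>a\<in>{c \<in> C. i \<in> c \<and> card c = w}. ?g (?g a) = a" using inv by auto
    show "\<forall>a\<in>{c \<in> C. i \<notin> c \<and> card c = n - w}. ?g (?g a) = a" using inv by auto
    show "?g ` {c \<in> C. i \<in> c \<and> card c = w} \<subseteq> {c \<in> C. i \<notin> c \<and> card c = n - w}"
      using compl card_compl by auto
    show "?g ` {c \<in> C. i \<notin> c \<and> card c = n - w} \<subseteq> {c \<in> C. i \<in> c \<and> card c = w}"
    proof
      fix x assume "x \<in> ?g ` {c \<in> C. i \<notin> c \<and> card c = n - w}"
      then obtain c where c: "c \<in> C" "i \<notin> c" "card c = n - w" "x = ?g c" by auto
      have "card x = w" using c card_compl w by simp
      then show "x \<in> {c \<in> C. i \<in> c \<and> card c = w}" using c compl i_lt by auto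
    qed
  qed
  then show ?thesis unfolding f_def by (rule bij_betw_same_card)
qed

lemma wenum_le: "w \<le> n \<Longrightarrow> weight_enum C w = f w + f (n - w)"
proof -
  assume w: "w \<le> n"
  have "{c\<in>C. wt c = w} = {c\<in>C. i \<notin> c \<and> card c = w} \<union> {c\<in>C. i \<in> c \<and> card c = w}"
    by (auto simp: wt_def)
  moreover have "card ({c\<in>C. i \<notin> c \<and> card c = w} \<union> {c\<in>C. i \<in> c \<and> card c = w})
     = card {c\<in>C. i \<notin> c \<and> card c = w} + card {c\<in>C. i \<in> c \<and> card c = w}"
    by (rule card_Un_disjoint) (use fC in auto)
  ultimately show ?thesis unfolding weight_enum_def using f_compl[OF w] by (simp add: f_def)
qed

lemma wenum_gt: "n < w \<Longrightarrow> weight_enum C w = 0"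
proof -
  assume w: "n < w"
  have "{c\<in>C. wt c = w} = {}"
  proof -
    have "\<And>c. c \<in> C \<Longrightarrow> card c \<le> n"
      using sub by (metis card_lessThan card_mono finite_lessThan)
    then show ?thesis using w by (force simp: wt_def)
  qed
  then show ?thesis unfolding weight_enum_def by (metis card.empty)
qed

lemma f0: "f 0 = 1"
proof -
  have "{c\<in>C. i \<notin> c \<and> card c = 0} = {{}}" using emptyC fin by auto
  then show ?thesis by (simp add: f_def)
qed

lemma f_supp:
  assumes "c \<in> C" "i \<notin> c" "c \<noteq> {}"
  shows "\<exists>t<4*m+2. card c = 4*m+4+4*t"
proof -
  have m4: "card c mod 4 = 0" using key assms by blast
  have lo: "4*m+2 \<le> card c" using minw assms by blast
  have "{..<n} - c \<in> C" "{..<n} - c \<noteq> {}" using compl assms i_lt by auto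
  then have "4*m+2 \<le> n - card c" using minw card_compl assms by metis
  then have hi: "card c \<le> 20*m+8" using n by simp
  show ?thesis by (rule ar3[OF m4 lo hi])
qed

lemma f_zero: "w \<noteq> 0 \<Longrightarrow> (\<forall>t<4*m+2. w \<noteq> 4*m+4+4*t) \<Longrightarrow> f w = 0"
proof -
  assume "w \<noteq> 0" "\<forall>t<4*m+2. w \<noteq> 4*m+4+4*t"
  then have "{c\<in>C. i \<notin> c \<and> card c = w} = {}" using f_supp by fastforce
  then show "f w = 0" unfolding f_def by (metis card.empty)
qed

end

context sdc begin

lemma group_f:
  fixes g :: "nat \<Rightarrow> nat"
  shows "(\<Sum>c\<in>{c\<in>C. i \<notin> c}. g (card c)) = g 0 + (\<Sum>t<4*m+2. f (4*m+4+4*t) * g (4*m+4+4*t))"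
proof -
  let ?P = "{c\<in>C. i \<notin> c}"
  have fP: "finite ?P" using fC by simp
  have im: "card ` ?P \<subseteq> {..n}"
    using sub by (auto, metis card_lessThan card_mono finite_lessThan)
  have "(\<Sum>c\<in>?P. g (card c)) = (\<Sum>w\<in>{..n}. \<Sum>c\<in>{c. c \<in> ?P \<and> card c = w}. g (card c))"
    using sum.group[OF fP _ im, of "\<lambda>c. g (card c)"] by simp
  also have "\<dots> = (\<Sum>w\<in>{..n}. f w * g w)"
  proof (rule sum.cong[OF refl])
    fix w
    have "(\<Sum>c\<in>{c. c \<in> ?P \<and> card c = w}. g (card c)) = (\<Sum>c\<in>{c. c \<in> ?P \<and> card c = w}. g w)"
      by (rule sum.cong) auto
    also have "\<dots> = card {c. c \<in> ?P \<and> card c = w} * g w" by simp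
    also have "{c. c \<in> ?P \<and> card c = w} = {c\<in>C. i \<notin> c \<and> card c = w}" by auto
    finally show "(\<Sum>c\<in>{c. c \<in> ?P \<and> card c = w}. g (card c)) = f w * g w" by (simp add: f_def)
  qed
  also have "\<dots> = (\<Sum>w\<in>insert 0 ((\<lambda>t. 4*m+4+4*t) ` {..<4*m+2}). f w * g w)"
  proof (rule sum.mono_neutral_right)
    show "insert 0 ((\<lambda>t. 4*m+4+4*t) ` {..<4*m+2}) \<subseteq> {..n}" using n by auto
    show "\<forall>w\<in>{..n} - insert 0 ((\<lambda>t. 4*m+4+4*t) ` {..<4*m+2}). f w * g w = 0"
      using f_zero by auto
  qed simp
  also have "\<dots> = f 0 * g 0 + (\<Sum>w\<in>(\<lambda>t. 4*m+4+4*t) ` {..<4*m+2}. f w * g w)"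
    by (rule sum.insert) auto
  also have "(\<Sum>w\<in>(\<lambda>t. 4*m+4+4*t) ` {..<4*m+2}. f w * g w) = (\<Sum>t<4*m+2. f (4*m+4+4*t) * g (4*m+4+4*t))"
    by (rule sum.reindex_cong[where l="\<lambda>t. 4*m+4+4*t"]) (auto simp: inj_on_def)
  finally show ?thesis using f0 by simp
qed

lemma moment:
  assumes mu: "\<mu> \<le> 4*m+1"
  shows "2^(Suc \<mu>) * (\<Sum>c\<in>{c\<in>C. i \<notin> c}. (n - card c - 1) choose \<mu>)
       = card C * (((n-1) choose \<mu>) + (if \<mu> = 4*m+1 then f (20*m+8) else 0))"
proof -
  define F where "F = {T. T \<subseteq> {..<n} \<and> i \<in> T \<and> card T = Suc \<mu>}"
  have fF: "finite F" unfolding F_def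
    by (rule finite_subset[of _ "Pow {..<n}"]) auto
  have each: "\<And>T. T \<in> F \<Longrightarrow> card {c\<in>C. T \<inter> c = {}} * 2 ^ Suc \<mu> = card C * card {x\<in>C. x \<subseteq> T}"
  proof -
    fix T assume "T \<in> F"
    then have "T \<subseteq> {..<n}" "card T = Suc \<mu>" by (auto simp: F_def)
    then show "card {c\<in>C. T \<inter> c = {}} * 2 ^ Suc \<mu> = card C * card {x\<in>C. x \<subseteq> T}"
      using mw_identity[OF sd, of T] by simp
  qed
  have "(\<Sum>T\<in>F. card {c\<in>C. T \<inter> c = {}}) * 2 ^ Suc \<mu> = card C * (\<Sum>T\<in>F. card {x\<in>C. x \<subseteq> T})"
    using each by (simp add: sum_distrib_right sum_distrib_left)
  moreover have L: "(\<Sum>T\<in>F. card {c\<in>C. T \<inter> c = {}}) = (\<Sum>c\<in>{c\<in>C. i \<notin> c}. (n - card c - 1) choose \<mu>)"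
  proof -
    have "(\<Sum>T\<in>F. card {c\<in>C. T \<inter> c = {}}) = (\<Sum>c\<in>C. card {T\<in>F. T \<inter> c = {}})"
      by (rule dcount[OF fF fC])
    also have "\<dots> = (\<Sum>c\<in>C. if i \<notin> c then (n - card c - 1) choose \<mu> else 0)"
    proof (rule sum.cong[OF refl])
      fix c assume c: "c \<in> C"
      show "card {T\<in>F. T \<inter> c = {}} = (if i \<notin> c then (n - card c - 1) choose \<mu> else 0)"
      proof (cases "i \<in> c")
        case True
        then have "{T\<in>F. T \<inter> c = {}} = {}" unfolding F_def by auto
        then show ?thesis using True by (metis card.empty)
      next
        case False
        have "{T\<in>F. T \<inter> c = {}} = {T. T \<subseteq> {..<n} - c \<and> i \<in> T \<and> card T = Suc \<mu>}"
          unfolding F_def by auto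
        moreover have "card {T. T \<subseteq> {..<n} - c \<and> i \<in> T \<and> card T = Suc \<mu>} = (card ({..<n} - c) - 1) choose \<mu>"
          by (rule cnt) (use False i_lt in auto)
        ultimately show ?thesis using False card_compl[OF c] by simp
      qed
    qed
    also have "\<dots> = (\<Sum>c\<in>{c\<in>C. i \<notin> c}. (n - card c - 1) choose \<mu>)"
      using sum.inter_filter[OF fC, of "\<lambda>c. (n - card c - 1) choose \<mu>" "\<lambda>c. i \<notin> c"] by simp
    finally show ?thesis .
  qed
  moreover have R: "(\<Sum>T\<in>F. card {x\<in>C. x \<subseteq> T}) = ((n-1) choose \<mu>) + (if \<mu> = 4*m+1 then f (20*m+8) else 0)"
  proof -
    have "(\<Sum>T\<in>F. card {x\<in>C. x \<subseteq> T}) = (\<Sum>x\<in>C. card {T\<in>F. x \<subseteq> T})"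
      by (rule dcount[OF fF fC])
    also have "\<dots> = card {T\<in>F. {} \<subseteq> T} + (\<Sum>x\<in>C - {{}}. card {T\<in>F. x \<subseteq> T})"
      using fC emptyC by (simp add: sum.remove)
    also have "card {T\<in>F. {} \<subseteq> T} = (n-1) choose \<mu>"
    proof -
      have "card F = (card {..<n} - 1) choose \<mu>" unfolding F_def by (rule cnt) (use i_lt in auto)
      then show ?thesis by simp
    qed
    also have "(\<Sum>x\<in>C - {{}}. card {T\<in>F. x \<subseteq> T}) = (\<Sum>x\<in>C - {{}}. if card x = Suc \<mu> \<and> i \<in> x then 1 else 0)"
    proof (rule sum.cong[OF refl])
      fix x assume x: "x \<in> C - {{}}"
      have "4*m+2 \<le> card x" using minw[of x] x by blast
      then have big: "Suc \<mu> \<le> card x" using mu by simp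
      have fx: "finite x" using fin x by simp
      have "{T\<in>F. x \<subseteq> T} = (if card x = Suc \<mu> \<and> i \<in> x then {x} else {})"
      proof -
        have "\<And>T. T \<in> F \<Longrightarrow> x \<subseteq> T \<Longrightarrow> T = x \<and> card x = Suc \<mu>"
        proof -
          fix T assume T: "T \<in> F" "x \<subseteq> T"
          have fT: "finite T" using T unfolding F_def using finite_subset by blast
          have cT: "card T = Suc \<mu>" using T unfolding F_def by simp
          have "card x \<le> card T" using card_mono[OF fT T(2)] .
          then have "card x = card T" using big cT by simp
          then have "x = T" using card_subset_eq[OF fT T(2)] by simp
          then show "T = x \<and> card x = Suc \<mu>" using cT by simp
        qed
        moreover have "card x = Suc \<mu> \<Longrightarrow> i \<in> x \<Longrightarrow> x \<in> F"
          unfolding F_def using sub x by auto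
        ultimately show ?thesis unfolding F_def by auto
      qed
      then show "card {T\<in>F. x \<subseteq> T} = (if card x = Suc \<mu> \<and> i \<in> x then 1 else 0)" by simp
    qed
    also have "\<dots> = card {x\<in>C - {{}}. card x = Suc \<mu> \<and> i \<in> x}"
      using fC by (simp add: sum.If_cases Int_def conj_commute)
    also have "card {x\<in>C - {{}}. card x = Suc \<mu> \<and> i \<in> x} = (if \<mu> = 4*m+1 then f (20*m+8) else 0)"
    proof (cases "\<mu> = 4*m+1")
      case True
      have "{x\<in>C - {{}}. card x = Suc \<mu> \<and> i \<in> x} = {c\<in>C. i \<in> c \<and> card c = 4*m+2}"
        using True by auto
      moreover have "card {c\<in>C. i \<in> c \<and> card c = 4*m+2} = f (n - (4*m+2))"
        by (rule f_compl) (use n in simp)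
      moreover have "n - (4*m+2) = 20*m+8" using n by simp
      ultimately show ?thesis using True by simp
    next
      case False
      then have "Suc \<mu> < 4*m+2" using mu by simp
      then have "{x\<in>C - {{}}. card x = Suc \<mu> \<and> i \<in> x} = {}"
      proof (intro equals0I)
        fix x assume "x \<in> {x\<in>C - {{}}. card x = Suc \<mu> \<and> i \<in> x}"
        then have "4*m+2 \<le> card x" "card x = Suc \<mu>" using minw[of x] by auto
        then show False using \<open>Suc \<mu> < 4*m+2\<close> by simp
      qed
      then show ?thesis using False by (metis card.empty)
    qed
    finally show ?thesis .
  qed
  ultimately show ?thesis by (simp add: mult.commute)
qed

end

lemma extract_sdc:
  assumes nk: "is_nkd_code (24*m+10) (12*m+5) (4*m+2) C"
      and sd: "self_dual (24*m+10) C" and ms: "minimal_shadow (24*m+10) C"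
  shows "\<exists>i. sdc m (24*m+10) C i"
proof -
  let ?n = "24*m+10"
  have lin: "linear_code ?n C" using sd by (simp add: self_dual_def)
  have fC: "finite C" using lin finite_words finite_subset by (auto simp: linear_code_def)
  have cardC: "card C = 2^(12*m+5)" using nk by (simp add: is_nkd_code_def code_dim_def)
  have mw: "min_weight C = 4*m+2" using nk by (simp add: is_nkd_code_def)
  have minw: "\<And>c. c \<in> C \<Longrightarrow> c \<noteq> {} \<Longrightarrow> 4*m+2 \<le> card c"
  proof -
    fix c assume "c \<in> C" "c \<noteq> {}"
    then have "wt c \<in> wt ` (C - {{}})" by auto
    then have "Min (wt ` (C - {{}})) \<le> wt c" using fC by (intro Min_le) auto
    then show "4*m+2 \<le> card c" using mw by (simp add: min_weight_def wt_def)
  qed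
  have Sne: "shadow ?n C \<noteq> {}" and S1: "min_wt_set (shadow ?n C) = 1"
    using ms by (auto simp: minimal_shadow_def)
  have fS: "finite (shadow ?n C)"
    unfolding shadow_def dual_code_def using finite_words
    by (rule finite_subset[rotated]) auto
  have "Min (wt ` shadow ?n C) \<in> wt ` shadow ?n C" using fS Sne by (intro Min_in) auto
  then obtain s where s: "s \<in> shadow ?n C" "card s = 1" using S1 by (auto simp: min_wt_set_def wt_def)
  then obtain i where si: "s = {i}" by (metis card_1_singletonE)
  have "{i} \<in> dual_code ?n (doubly_even_subcode C)" "{i} \<notin> C"
    using s si by (auto simp: shadow_def)
  then have "sdc m ?n C i" using sd cardC minw by (unfold_locales) auto
  then show ?thesis by blast
qed

lemma lincomb:
  fixes p q g x a1 a2 y1 y2 :: real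
  assumes "p*(g + a1) = q*(x+y1)" "p*(g+a2) = q*(x+y2)"
  shows "p*(a1-a2) = q*(y1-y2)"
proof -
  have "p*(a1-a2) = p*(g+a1) - p*(g+a2)" by (simp add: algebra_simps)
  also have "\<dots> = q*(x+y1) - q*(x+y2)" by (simp only: assms)
  also have "\<dots> = q*(y1-y2)" by (simp add: algebra_simps)
  finally show ?thesis .
qed

lemma sign_prod:
  fixes m :: nat
  shows "(\<Prod>s<4*m+1. (real (20*m+5-4*(4*m+1)) - real (20*m+5-4*s))) < 0"
proof -
  have "(\<Prod>s<4*m+1. (real (20*m+5-4*(4*m+1)) - real (20*m+5-4*s)))
      = (\<Prod>s<4*m+1. - (real (20*m+5-4*s) - real (20*m+5-4*(4*m+1))))" by (simp only: minus_diff_eq)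
  also have "\<dots> = (-1) ^ card {..<4*m+1} * (\<Prod>s<4*m+1. (real (20*m+5-4*s) - real (20*m+5-4*(4*m+1))))"
    by (rule prod_uminus)
  also have "\<dots> = - (\<Prod>s<4*m+1. (real (20*m+5-4*s) - real (20*m+5-4*(4*m+1))))" by simp
  finally have eq: "(\<Prod>s<4*m+1. (real (20*m+5-4*(4*m+1)) - real (20*m+5-4*s)))
      = - (\<Prod>s<4*m+1. (real (20*m+5-4*s) - real (20*m+5-4*(4*m+1))))" .
  have "0 < (\<Prod>s<4*m+1. (real (20*m+5-4*s) - real (20*m+5-4*(4*m+1))))"
  proof (rule prod_pos)
    fix s assume "s \<in> {..<4*m+1}"
    then have "s < 4*m+1" by simp
    then have "20*m+5-4*(4*m+1) < 20*m+5-4*s" by simp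
    then show "0 < real (20*m+5-4*s) - real (20*m+5-4*(4*m+1))" by linarith
  qed
  then show ?thesis using eq by simp
qed

theorem mainTheorem4:
  fixes m :: nat and C D :: "nat set set"
  assumes "is_nkd_code (24*m+10) (12*m+5) (4*m+2) C"
      and "self_dual (24*m+10) C" and "singly_even C" and "minimal_shadow (24*m+10) C"
      and "is_nkd_code (24*m+10) (12*m+5) (4*m+2) D"
      and "self_dual (24*m+10) D" and "singly_even D" and "minimal_shadow (24*m+10) D"
  shows "weight_enum C = weight_enum D"
proof -
  let ?n = "24*m+10"
  obtain i1 where I1: "sdc m ?n C i1" using extract_sdc assms(1,2,4) by blast
  obtain i2 where I2: "sdc m ?n D i2" using extract_sdc assms(5,6,8) by blast
  interpret c1: sdc m ?n C i1 by (rule I1)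
  interpret c2: sdc m ?n D i2 by (rule I2)
  define K where "K = 4*m+2"
  define a where "a t = 20*m+5-4*t" for t
  define z where "z t = real (c1.f (4*m+4+4*t)) - real (c2.f (4*m+4+4*t))" for t
  have eqs: "\<And>\<mu>. \<mu> \<le> 4*m+1 \<Longrightarrow>
     2^(Suc \<mu>) * (\<Sum>t<K. z t * real (a t choose \<mu>)) = 2^(12*m+5) * (if \<mu> = 4*m+1 then z (4*m+1) else 0)"
  proof -
    fix \<mu> assume mu: "\<mu> \<le> 4*m+1"
    let ?g = "\<lambda>w. (?n - w - 1) choose \<mu>"
    have gw: "\<And>t. ?g (4*m+4+4*t) = a t choose \<mu>" unfolding a_def by (simp add: add.commute)
    have E1: "2^(Suc \<mu>) * (?g 0 + (\<Sum>t<K. c1.f (4*m+4+4*t) * (a t choose \<mu>)))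
        = 2^(12*m+5) * (((?n-1) choose \<mu>) + (if \<mu> = 4*m+1 then c1.f (20*m+8) else 0))"
      using c1.moment[OF mu] c1.group_f[of ?g] c1.cardC unfolding K_def gw by simp
    have E2: "2^(Suc \<mu>) * (?g 0 + (\<Sum>t<K. c2.f (4*m+4+4*t) * (a t choose \<mu>)))
        = 2^(12*m+5) * (((?n-1) choose \<mu>) + (if \<mu> = 4*m+1 then c2.f (20*m+8) else 0))"
      using c2.moment[OF mu] c2.group_f[of ?g] c2.cardC unfolding K_def gw by simp
    have R1: "2^(Suc \<mu>) * (real (?g 0) + (\<Sum>t<K. real (c1.f (4*m+4+4*t)) * real (a t choose \<mu>)))
        = 2^(12*m+5) * (real ((?n-1) choose \<mu>) + (if \<mu> = 4*m+1 then real (c1.f (20*m+8)) else 0))"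
      using arg_cong[OF E1, of real] by simp
    have R2: "2^(Suc \<mu>) * (real (?g 0) + (\<Sum>t<K. real (c2.f (4*m+4+4*t)) * real (a t choose \<mu>)))
        = 2^(12*m+5) * (real ((?n-1) choose \<mu>) + (if \<mu> = 4*m+1 then real (c2.f (20*m+8)) else 0))"
      using arg_cong[OF E2, of real] by simp
    have zs: "(\<Sum>t<K. z t * real (a t choose \<mu>)) = (\<Sum>t<K. real (c1.f (4*m+4+4*t)) * real (a t choose \<mu>)) - (\<Sum>t<K. real (c2.f (4*m+4+4*t)) * real (a t choose \<mu>))"
      unfolding z_def by (simp add: sum_subtractf left_diff_distrib)
    have z20: "z (4*m+1) = real (c1.f (20*m+8)) - real (c2.f (20*m+8))"
      unfolding z_def by (simp add: algebra_simps)
    show "2^(Suc \<mu>) * (\<Sum>t<K. z t * real (a t choose \<mu>)) = 2^(12*m+5) * (if \<mu> = 4*m+1 then z (4*m+1) else 0)"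
    proof -
      have "2^(Suc \<mu>) * ((\<Sum>t<K. real (c1.f (4*m+4+4*t)) * real (a t choose \<mu>)) - (\<Sum>t<K. real (c2.f (4*m+4+4*t)) * real (a t choose \<mu>)))
        = 2^(12*m+5) * ((if \<mu> = 4*m+1 then real (c1.f (20*m+8)) else 0) - (if \<mu> = 4*m+1 then real (c2.f (20*m+8)) else 0))"
        by (rule lincomb[OF R1 R2])
      moreover have "(if \<mu> = 4*m+1 then real (c1.f (20*m+8)) else 0) - (if \<mu> = 4*m+1 then real (c2.f (20*m+8)) else 0)
         = (if \<mu> = 4*m+1 then z (4*m+1) else 0)" using z20 by simp
      ultimately show ?thesis using zs by simp
    qed
  qed
  have zero: "\<And>t. t < K \<Longrightarrow> z t = 0"
  proof (rule lin_unique[where a=a and c="2^(8*m+3)"])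
    show "1 \<le> K" unfolding K_def by simp
    show "\<And>\<nu>. \<nu> < K - 1 \<Longrightarrow> (\<Sum>t<K. z t * real (a t choose \<nu>)) = 0"
    proof -
      fix \<nu> assume "\<nu> < K - 1"
      then have "\<nu> \<le> 4*m+1" "\<nu> \<noteq> 4*m+1" unfolding K_def by auto
      then show "(\<Sum>t<K. z t * real (a t choose \<nu>)) = 0" using eqs[of \<nu>] by simp
    qed
    show "(\<Sum>t<K. z t * real (a t choose (K-1))) = 2^(8*m+3) * z (K-1)"
    proof -
      have k: "K - 1 = 4*m+1" unfolding K_def by simp
      have "(2::real)^(Suc (4*m+1)) * (\<Sum>t<K. z t * real (a t choose (4*m+1))) = 2^(12*m+5) * z (4*m+1)"
        using eqs[of "4*m+1"] by simp
      moreover have "(2::real)^(12*m+5) = 2^(Suc (4*m+1)) * 2^(8*m+3)"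
      proof -
        have e: "12*m+5 = Suc (4*m+1) + (8*m+3)" by simp
        show ?thesis by (subst e) (rule power_add)
      qed
      ultimately have "(2::real)^(Suc (4*m+1)) * (\<Sum>t<K. z t * real (a t choose (4*m+1)))
          = 2^(Suc (4*m+1)) * (2^(8*m+3) * z (4*m+1))" by simp
      then show ?thesis unfolding k by simp
    qed
    show "inj_on a {..<K}" unfolding a_def K_def inj_on_def by auto
    show "(\<Prod>s<K-1. (real (a (K-1)) - real (a s))) \<noteq> 2^(8*m+3) * fact (K-1)"
    proof -
      have k: "K - 1 = 4*m+1" unfolding K_def by simp
      have "(\<Prod>s<K-1. (real (a (K-1)) - real (a s))) < 0"
        unfolding k a_def using sign_prod[of m] by simp
      moreover have "(0::real) < 2^(8*m+3) * fact (K-1)" by simp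
      ultimately show ?thesis by linarith
    qed
  qed
  have feq: "\<And>w. c1.f w = c2.f w"
  proof -
    fix w
    show "c1.f w = c2.f w"
    proof (cases "w = 0")
      case True then show ?thesis using c1.f0 c2.f0 by simp
    next
      case False
      show ?thesis
      proof (cases "\<exists>t<4*m+2. w = 4*m+4+4*t")
        case True
        then obtain t where t: "t < K" "w = 4*m+4+4*t" unfolding K_def by blast
        then show ?thesis using zero[OF t(1)] unfolding z_def by simp
      next
        case nt: False
        then have nn: "\<forall>t<4*m+2. w \<noteq> 4*m+4+4*t" by blast
        show ?thesis using c1.f_zero[OF False nn] c2.f_zero[OF False nn] by simp
      qed
    qed
  qed
  show ?thesis
  proof
    fix w
    show "weight_enum C w = weight_enum D w"
    proof (cases "w \<le> ?n")
      case True then show ?thesis using c1.wenum_le[OF True] c2.wenum_le[OF True] feq[of w] feq[of "?n - w"] by simp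
    next
      case False
      then have "?n < w" by simp
      then show ?thesis using c1.wenum_gt c2.wenum_gt by simp
    qed
  qed
qed

end
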